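(* For every frame $\mathcal{F}=\langle S,R\rangle$, $\mathcal{F}\vDash \bullet q\land\Delta p\land\circ(\neg q\to p)\to\circ(\neg q\to\circ(\neg r\to p))$ (for distinct propositional variables $p,q,r$) if and only if $R$ is transitive.
   Context: Fix a nonempty set $\mathbf{P}$ of propositional variables (containing distinct $p,q,r$). $\mathcal{L}(\nabla,\bullet)$: $\phi::=p\mid\neg\phi\mid\phi\land\phi\mid\nabla\phi\mid\bullet\phi$; $\Delta\phi:=\neg\nabla\phi$, $\circ\phi:=\neg\bullet\phi$. A frame is $\langle S,R\rangle$ with $S\neq\emptyset$, $R\subseteq S\times S$; a model based on it adds $V:\mathbf{P}\to\mathcal{P}(S)$. Truth: $\mathcal{M},s\vDash\nabla\phi$ iff there are $t,u$ with $sRt$, $sRu$, $\mathcal{M},t\vDash\phi$, $\mathcal{M},u\nvDash\phi$; $\mathcal{M},s\vDash\bullet\phi$ iff $\mathcal{M},s\vDash\phi$ and there is $t$ with $sRt$, $\mathcal{M},t\nvDash\phi$. $\mathcal{F}\vDash\phi$ means $\phi$ is true at every state of every model based on $\mathcal{F}$. *)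

theory Defs
  imports Main
begin

datatype 'p form =
    Atom 'p
  | Neg "'p form"
  | Conj "'p form" "'p form"
  | Nabla "'p form"
  | Bullet "'p form"

definition Delta :: "'p form \<Rightarrow> 'p form" where
  "Delta \<phi> = Neg (Nabla \<phi>)"

definition Circ :: "'p form \<Rightarrow> 'p form" where
  "Circ \<phi> = Neg (Bullet \<phi>)"

definition Imp :: "'p form \<Rightarrow> 'p form \<Rightarrow> 'p form" where
  "Imp \<phi> \<psi> = Neg (Conj \<phi> (Neg \<psi>))"

definition is_frame :: "'s set \<Rightarrow> ('s \<times> 's) set \<Rightarrow> bool" where
  "is_frame S R \<longleftrightarrow> S \<noteq> {} \<and> R \<subseteq> S \<times> S"

fun sat :: "('s \<times> 's) set \<Rightarrow> ('p \<Rightarrow> 's set) \<Rightarrow> 's \<Rightarrow> 'p form \<Rightarrow> bool" where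
  "sat R V s (Atom p) = (s \<in> V p)"
| "sat R V s (Neg \<phi>) = (\<not> sat R V s \<phi>)"
| "sat R V s (Conj \<phi> \<psi>) = (sat R V s \<phi> \<and> sat R V s \<psi>)"
| "sat R V s (Nabla \<phi>) =
     (\<exists>t u. (s, t) \<in> R \<and> (s, u) \<in> R \<and> sat R V t \<phi> \<and> \<not> sat R V u \<phi>)"
| "sat R V s (Bullet \<phi>) = (sat R V s \<phi> \<and> (\<exists>t. (s, t) \<in> R \<and> \<not> sat R V t \<phi>))"

definition frame_valid :: "'s set \<Rightarrow> ('s \<times> 's) set \<Rightarrow> 'p form \<Rightarrow> bool" where
  "frame_valid S R \<phi> \<longleftrightarrow>
     (\<forall>V :: 'p \<Rightarrow> 's set. (\<forall>x. V x \<subseteq> S) \<longrightarrow> (\<forall>s\<in>S. sat R V s \<phi>))"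

end

theory Submission
  imports Defs
begin

lemma dir1:
  fixes S :: "'s set" and R :: "('s \<times> 's) set" and p q r :: 'p
  assumes "is_frame S R"
    and "p \<noteq> q" and "p \<noteq> r" and "q \<noteq> r"
  and v: "frame_valid S R
           (Imp (Conj (Conj (Bullet (Atom q)) (Delta (Atom p)))
                      (Circ (Imp (Neg (Atom q)) (Atom p))))
                (Circ (Imp (Neg (Atom q)) (Circ (Imp (Neg (Atom r)) (Atom p))))))"
  shows "trans R"
proof (rule transI, rule ccontr)
  fix s u w assume su: "(s,u) \<in> R" and uw: "(u,w) \<in> R" and nsw: "(s,w) \<notin> R"
  define V where "V = (\<lambda>x. if x = p then R``{s} else if x = q then {s} else ({}::'s set))"
  have sS: "s \<in> S" using assms(1) su unfolding is_frame_def by auto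
  have VS: "\<forall>x. V x \<subseteq> S" using assms(1) sS unfolding V_def is_frame_def by auto
  have us: "u \<noteq> s" using uw nsw by auto
  have Vp: "V p = R``{s}" and Vq: "V q = {s}" and Vr: "V r = {}"
    using assms(2-4) unfolding V_def by auto
  from v VS sS have "sat R V s
           (Imp (Conj (Conj (Bullet (Atom q)) (Delta (Atom p)))
                      (Circ (Imp (Neg (Atom q)) (Atom p))))
                (Circ (Imp (Neg (Atom q)) (Circ (Imp (Neg (Atom r)) (Atom p))))))"
    unfolding frame_valid_def by blast
  hence "\<not> (s \<in> V q \<and> (\<exists>t. (s,t) \<in> R \<and> t \<notin> V q) \<and>
        (\<forall>t u. (s,t) \<in> R \<longrightarrow> (s,u) \<in> R \<longrightarrow> t \<in> V p \<longrightarrow> u \<in> V p) \<and>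
        (\<forall>t. (s,t) \<in> R \<longrightarrow> t \<in> V q \<or> t \<in> V p)) \<or>
        (\<forall>u. (s,u) \<in> R \<longrightarrow> u \<in> V q \<or> (u \<notin> V r \<and> u \<notin> V p) \<or> (\<forall>v. (u,v) \<in> R \<longrightarrow> v \<in> V r \<or> v \<in> V p))"
    unfolding Imp_def Delta_def Circ_def by simp blast
  moreover have "s \<in> V q" "(s,u) \<in> R \<and> u \<notin> V q"
     "\<forall>t u. (s,t) \<in> R \<longrightarrow> (s,u) \<in> R \<longrightarrow> t \<in> V p \<longrightarrow> u \<in> V p"
     "\<forall>t. (s,t) \<in> R \<longrightarrow> t \<in> V q \<or> t \<in> V p"
    using su us unfolding Vp Vq by auto
  moreover have "\<not> (u \<in> V q \<or> (u \<notin> V r \<and> u \<notin> V p) \<or> (\<forall>v. (u,v) \<in> R \<longrightarrow> v \<in> V r \<or> v \<in> V p))"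
    using uw nsw us su unfolding Vp Vq Vr by auto
  ultimately show False using su by blast
qed

lemma dir2:
  fixes S :: "'s set" and R :: "('s \<times> 's) set" and p q r :: 'p
  assumes t: "trans R"
  shows "frame_valid S R
           (Imp (Conj (Conj (Bullet (Atom q)) (Delta (Atom p)))
                      (Circ (Imp (Neg (Atom q)) (Atom p))))
                (Circ (Imp (Neg (Atom q)) (Circ (Imp (Neg (Atom r)) (Atom p))))))"
  unfolding frame_valid_def Imp_def Delta_def Circ_def
proof (intro allI impI ballI)
  fix V :: "'p \<Rightarrow> 's set" and s
  have "s \<in> V q \<Longrightarrow> (\<exists>t. (s,t) \<in> R \<and> t \<notin> V q) \<Longrightarrow>
        (\<forall>t u. (s,t) \<in> R \<longrightarrow> (s,u) \<in> R \<longrightarrow> t \<in> V p \<longrightarrow> u \<in> V p) \<Longrightarrow>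
        (\<forall>t. (s,t) \<in> R \<longrightarrow> t \<in> V q \<or> t \<in> V p) \<Longrightarrow>
        (\<forall>u v. (s,u) \<in> R \<longrightarrow> (u,v) \<in> R \<longrightarrow> v \<in> V p)"
    using t by (meson transD)
  then show "sat R V s (Neg (Conj (Conj (Conj (Bullet (Atom q)) (Neg (Nabla (Atom p))))
                  (Neg (Bullet (Neg (Conj (Neg (Atom q)) (Neg (Atom p)))))))
            (Neg (Neg (Bullet (Neg (Conj (Neg (Atom q)) (Neg (Neg (Bullet (Neg (Conj (Neg (Atom r)) (Neg (Atom p))))))))))))))"
    by simp blast
qed

theorem proposition5:
  fixes S :: "'s set" and R :: "('s \<times> 's) set" and p q r :: 'p
  assumes "is_frame S R"
    and "p \<noteq> q" and "p \<noteq> r" and "q \<noteq> r"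
  shows "frame_valid S R
           (Imp (Conj (Conj (Bullet (Atom q)) (Delta (Atom p)))
                      (Circ (Imp (Neg (Atom q)) (Atom p))))
                (Circ (Imp (Neg (Atom q)) (Circ (Imp (Neg (Atom r)) (Atom p))))))
         \<longleftrightarrow> trans R"
proof
  assume "frame_valid S R
           (Imp (Conj (Conj (Bullet (Atom q)) (Delta (Atom p)))
                      (Circ (Imp (Neg (Atom q)) (Atom p))))
                (Circ (Imp (Neg (Atom q)) (Circ (Imp (Neg (Atom r)) (Atom p))))))"
  then show "trans R" by (rule dir1[OF assms])
next
  assume "trans R"
  then show "frame_valid S R
           (Imp (Conj (Conj (Bullet (Atom q)) (Delta (Atom p)))
                      (Circ (Imp (Neg (Atom q)) (Atom p))))
                (Circ (Imp (Neg (Atom q)) (Circ (Imp (Neg (Atom r)) (Atom p))))))" by (rule dir2)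
qed

end
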